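(* For an integer $m\ge0$ let $\mathbf{S}_m=\{1,\dots,m\}^2$, where a square $(i,j)$ has column $i$ and row $j$. Two distinct squares $(i,j),(i',j')$ attack each other (as anassas, with moves $(0,1)$ and $(1,1)$) if $i=i'$ or $i-j=i'-j'$. Let $A_{\mathbf{S}}(m,k,p)$ be the number of $k$-element subsets of $\mathbf{S}_m$ with no two elements attacking each other and with exactly $p$ elements $(i,j)$ satisfying $j<i$ (strictly below the main diagonal); set $A_{\mathbf{S}}(m,k,p)=0$ if $k<0$ or $p<0$. Then for integers $m\ge1$ and $k,p\ge 0$, $$A_{\mathbf{S}}(m,k,p)=A_{\mathbf{S}}(m-1,k,p)+(m-k+1)A_{\mathbf{S}}(m-1,k-1,p)+(m-p)A_{\mathbf{S}}(m-1,k-1,p-1)+(m-p)(m-k+1)A_{\mathbf{S}}(m-1,k-2,p-1),$$ with $A_{\mathbf{S}}(0,k,p)=\delta_{k0}\delta_{p0}$, $A_{\mathbf{S}}(m,0,p)=\delta_{p0}$, $A_{\mathbf{S}}(m,1,p)=\left\{ {m+1 \atop m}\right\}\delta_{p0}+\left\{ {m \atop m-1}\right\}\delta_{p1}$ and $A_{\mathbf{S}}(m,k,0)=\left\{ {m+1 \atop m-k+1}\right\}$. Moreover, for all integers $m,k,p\ge0$, $$A_{\mathbf{S}}(m,k,p)=\sum_{j=0}^{p}(m-k+j)_j\binom{k-p-1}{j}\binom{k-j}{k-p}\left\{ {m+1 \atop m-k+j+1}\right\}.$$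
   Context: $\delta_{ij}$ is the Kronecker delta and $(x)_j=x(x-1)\cdots(x-j+1)$, $(x)_0=1$. Stirling numbers of the second kind $\left\{ {n \atop r}\right\}$ are used in the extended sense for all integers: usual values for $n,r\ge0$; $\left\{ {n \atop r}\right\}=\left[{-r\atop -n}\right]$ (unsigned Stirling number of the first kind) for $n,r\le0$; and $0$ when one of $n,r$ is positive and the other negative. Binomial coefficients are extended to all integers $n,r$ (Kronenburg's convention): $\binom{n}{r}=n(n-1)\cdots(n-r+1)/r!$ if $r\ge0$; $\binom{n}{r}=(-1)^{n-r}\binom{-r-1}{n-r}$ if $r\le n<0$; and $\binom{n}{r}=0$ otherwise. *)

theory Defs
  imports Main "HOL-Combinatorics.Stirling"
begin

definition ffact_int :: "int \<Rightarrow> nat \<Rightarrow> int" where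
  "ffact_int x j = (\<Prod>i<j. x - int i)"

definition Stirling2_ext :: "int \<Rightarrow> int \<Rightarrow> int" where
  "Stirling2_ext n r =
     (if 0 \<le> n \<and> 0 \<le> r then int (Stirling (nat n) (nat r))
      else if n \<le> 0 \<and> r \<le> 0 then int (stirling (nat (- r)) (nat (- n)))
      else 0)"

text \<open>Binomial coefficients extended to all integers (Kronenburg); n(n-1)...(n-r+1)/r! is an exact integer division.\<close>
definition binom_ext :: "int \<Rightarrow> int \<Rightarrow> int" where
  "binom_ext n r =
     (if 0 \<le> r then ffact_int n (nat r) div fact (nat r)
      else if r \<le> n \<and> n < 0 then (-1) ^ nat (n - r) * (ffact_int (- r - 1) (nat (n - r)) div fact (nat (n - r)))
      else 0)"

definition board :: "nat \<Rightarrow> (nat \<times> nat) set" where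
  "board m = {1..m} \<times> {1..m}"

definition attacks :: "nat \<times> nat \<Rightarrow> nat \<times> nat \<Rightarrow> bool" where
  "attacks a b \<longleftrightarrow> a \<noteq> b \<and>
     (fst a = fst b \<or> int (fst a) - int (snd a) = int (fst b) - int (snd b))"

definition non_attacking :: "(nat \<times> nat) set \<Rightarrow> bool" where
  "non_attacking B \<longleftrightarrow> (\<forall>a\<in>B. \<forall>b\<in>B. \<not> attacks a b)"

definition A_S :: "nat \<Rightarrow> int \<Rightarrow> int \<Rightarrow> int" where
  "A_S m k p =
     (if k < 0 \<or> p < 0 then 0
      else int (card {B. B \<subseteq> board m \<and> card B = nat k \<and> non_attacking B \<and>
                       card {x \<in> B. snd x < fst x} = nat p}))"

end

theory Submission
  imports Defs
begin


definition cells :: "nat \<Rightarrow> (nat \<times> (nat + nat)) set" where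
  "cells m = {(i, Inl l) | i l. 1 \<le> i \<and> i \<le> l \<and> l \<le> m} \<union> {(i, Inr d) | i d. i \<le> m \<and> 1 \<le> d \<and> d < i}"

definition valid :: "(nat \<times> (nat + nat)) set \<Rightarrow> (nat \<times> (nat + nat)) set \<Rightarrow> bool" where
  "valid K T \<longleftrightarrow> T \<subseteq> K \<and> inj_on fst T \<and> inj_on snd T"

definition posc :: "(nat \<times> (nat + nat)) set \<Rightarrow> nat" where
  "posc T = card {x\<in>T. \<not> isl (snd x)}"

definition cnt :: "(nat \<times> (nat + nat)) set \<Rightarrow> nat \<Rightarrow> nat \<Rightarrow> nat" where
  "cnt K k p = card {T. valid K T \<and> card T = k \<and> posc T = p}"

definition compat :: "nat \<times> (nat + nat) \<Rightarrow> (nat \<times> (nat + nat)) set \<Rightarrow> bool" where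
  "compat x Q \<longleftrightarrow> (\<forall>y\<in>Q. fst y \<noteq> fst x \<and> snd y \<noteq> snd x)"

lemma finite_cells: "finite (cells m)"
proof -
  have "cells m \<subseteq> {0..m} \<times> (Inl ` {0..m} \<union> Inr ` {0..m})"
    unfolding cells_def by auto
  then show ?thesis by (rule finite_subset) auto
qed

lemma ext_split:
  assumes fK: "finite K" and fN: "finite N" and disj: "K \<inter> N = {}"
    and att: "\<forall>x\<in>N. \<forall>y\<in>N. fst x = fst y \<or> snd x = snd y"
    and pe: "\<forall>x\<in>N. (\<not> isl (snd x)) = e"
  shows "cnt (K \<union> N) k p = cnt K k p +
     card (SIGMA Q:{Q. valid K Q \<and> Suc (card Q) = k \<and> posc Q + (if e then 1 else 0) = p}. {x\<in>N. compat x Q})"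
proof -
  let ?A = "{T. valid (K \<union> N) T \<and> card T = k \<and> posc T = p}"
  let ?B = "{T. valid K T \<and> card T = k \<and> posc T = p}"
  let ?I = "{Q. valid K Q \<and> Suc (card Q) = k \<and> posc Q + (if e then 1 else 0) = p}"
  let ?S = "SIGMA Q:?I. {x\<in>N. compat x Q}"
  let ?f = "\<lambda>(Q, x). insert x Q"
  have finB: "finite ?B"
  proof (rule finite_subset)
    show "?B \<subseteq> Pow K" unfolding valid_def by auto
  qed (use fK in auto)
  have finA: "finite ?A"
  proof (rule finite_subset)
    show "?A \<subseteq> Pow (K \<union> N)" unfolding valid_def by auto
  qed (use fK fN in auto)
  have finS: "finite ?S"
  proof (rule finite_subset)
    show "?S \<subseteq> Pow K \<times> N" unfolding valid_def by auto
  qed (use fK fN in auto)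
  have posc_ins: "posc (insert x Q) = posc Q + (if e then 1 else 0)"
    if "x \<in> N" "Q \<subseteq> K" "finite Q" for x Q
  proof -
    have xn: "x \<notin> Q" using that disj by auto
    have "{y\<in>insert x Q. \<not> isl (snd y)} = (if e then insert x {y\<in>Q. \<not> isl (snd y)} else {y\<in>Q. \<not> isl (snd y)})"
      using pe that by auto
    then show ?thesis unfolding posc_def using xn that(3) by auto
  qed
  have inj: "inj_on ?f ?S"
  proof (rule inj_onI)
    fix a b assume a: "a \<in> ?S" and b: "b \<in> ?S" and eq: "?f a = ?f b"
    obtain Q x where aa: "a = (Q, x)" by (cases a)
    obtain Q' x' where bb: "b = (Q', x')" by (cases b)
    have "Q \<subseteq> K" "Q' \<subseteq> K" "x \<in> N" "x' \<in> N" using a b aa bb unfolding valid_def by auto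
    then have "x = x'" "Q = Q'" using eq aa bb disj by auto
    then show "a = b" using aa bb by simp
  qed
  have img: "?A = ?B \<union> ?f ` ?S"
  proof
    show "?A \<subseteq> ?B \<union> ?f ` ?S"
    proof
      fix T assume T: "T \<in> ?A"
      show "T \<in> ?B \<union> ?f ` ?S"
      proof (cases "T \<inter> N = {}")
        case True
        then have "T \<subseteq> K" using T unfolding valid_def by auto
        then show ?thesis using T unfolding valid_def by auto
      next
        case False
        then obtain x where x: "x \<in> T" "x \<in> N" by auto
        define Q where "Q = T - {x}"
        have TQ: "T = insert x Q" using x Q_def by auto
        have fT: "finite T" using T finA
          by (metis (no_types, lifting) Pow_iff fK fN finite_Un finite_subset mem_Collect_eq valid_def)
        have injf: "inj_on fst T" and injs: "inj_on snd T" and TK: "T \<subseteq> K \<union> N" using T unfolding valid_def by auto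
        have QK: "Q \<subseteq> K"
        proof
          fix y assume y: "y \<in> Q"
          then have yT: "y \<in> T" "y \<noteq> x" using Q_def by auto
          show "y \<in> K"
          proof (rule ccontr)
            assume "y \<notin> K"
            then have "y \<in> N" using yT TK by auto
            then have "fst x = fst y \<or> snd x = snd y" using att x by auto
            then show False using injf injs yT x unfolding inj_on_def by metis
          qed
        qed
        have cx: "compat x Q" unfolding compat_def
        proof
          fix y assume y: "y \<in> Q"
          then have yT: "y \<in> T" "y \<noteq> x" using Q_def by auto
          show "fst y \<noteq> fst x \<and> snd y \<noteq> snd x"
            using injf injs yT x unfolding inj_on_def by metis
        qed
        have vQ: "valid K Q" using QK injf injs unfolding valid_def Q_def
          by (meson Diff_subset inj_on_subset)
        have fQ: "finite Q" using fT Q_def by auto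
        have xQ: "x \<notin> Q" using Q_def by auto
        have "card T = Suc (card Q)" using TQ fQ xQ by simp
        moreover have "posc T = posc Q + (if e then 1 else 0)"
          using posc_ins[OF x(2) QK fQ] TQ by simp
        ultimately have "(Q, x) \<in> ?S" using T vQ x cx by auto
        then show ?thesis using TQ by force
      qed
    qed
  next
    show "?B \<union> ?f ` ?S \<subseteq> ?A"
    proof
      fix T assume "T \<in> ?B \<union> ?f ` ?S"
      then show "T \<in> ?A"
      proof
        assume "T \<in> ?B" then show ?thesis unfolding valid_def by auto
      next
        assume "T \<in> ?f ` ?S"
        then obtain Q x where Qx: "(Q, x) \<in> ?S" "T = insert x Q" by auto
        have vQ: "valid K Q" and x: "x \<in> N" and cx: "compat x Q"
          and cQ: "Suc (card Q) = k" and pQ: "posc Q + (if e then 1 else 0) = p" using Qx by auto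
        have QK: "Q \<subseteq> K" using vQ unfolding valid_def by auto
        have fQ: "finite Q" using QK fK finite_subset by auto
        have xQ: "x \<notin> Q" using x QK disj by auto
        have "inj_on fst T" using vQ cx Qx(2) unfolding valid_def compat_def
          by (auto simp: inj_on_def)
        moreover have "inj_on snd T" using vQ cx Qx(2) unfolding valid_def compat_def
          by (auto simp: inj_on_def)
        moreover have "T \<subseteq> K \<union> N" using QK x Qx(2) by auto
        moreover have "card T = k" using Qx(2) fQ xQ cQ by simp
        moreover have "posc T = p" using posc_ins[OF x QK fQ] Qx(2) pQ by simp
        ultimately show ?thesis unfolding valid_def by auto
      qed
    qed
  qed
  have dj: "?B \<inter> ?f ` ?S = {}"
  proof -
    { fix T assume "T \<in> ?B" "T \<in> ?f ` ?S"
      then obtain Q x where "(Q, x) \<in> ?S" "T = insert x Q" by auto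
      then have "x \<in> T" "x \<in> N" by auto
      moreover have "T \<subseteq> K" using \<open>T \<in> ?B\<close> unfolding valid_def by auto
      ultimately have False using disj by auto }
    then show ?thesis by blast
  qed
  have "card ?A = card ?B + card (?f ` ?S)"
    unfolding img by (rule card_Un_disjoint) (use finB finS dj in auto)
  also have "card (?f ` ?S) = card ?S" by (rule card_image[OF inj])
  finally show ?thesis unfolding cnt_def by simp
qed


definition cntI :: "(nat \<times> (nat + nat)) set \<Rightarrow> int \<Rightarrow> int \<Rightarrow> int" where
  "cntI K k p = (if k < 0 \<or> p < 0 then 0 else int (cnt K (nat k) (nat p)))"

lemma ext_int:
  assumes fK: "finite K" and fN: "finite N" and disj: "K \<inter> N = {}"
    and att: "\<forall>x\<in>N. \<forall>y\<in>N. fst x = fst y \<or> snd x = snd y"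
    and pe: "\<forall>x\<in>N. (\<not> isl (snd x)) = e"
    and cc: "\<And>Q. valid K Q \<Longrightarrow> int (card Q) = k - 1 \<Longrightarrow> int (posc Q) = p - (if e then 1 else 0)
               \<Longrightarrow> int (card {x\<in>N. compat x Q}) = c"
  shows "cntI (K \<union> N) k p = cntI K k p + c * cntI K (k - 1) (p - (if e then 1 else 0))"
proof (cases "k < 0 \<or> p < 0")
  case True
  then show ?thesis unfolding cntI_def by auto
next
  case False
  let ?e = "(if e then 1 else 0) :: nat"
  let ?I = "{Q. valid K Q \<and> Suc (card Q) = nat k \<and> posc Q + ?e = nat p}"
  have finI: "finite ?I"
  proof (rule finite_subset)
    show "?I \<subseteq> Pow K" unfolding valid_def by auto
  qed (use fK in auto)
  have "int (card (SIGMA Q:?I. {x\<in>N. compat x Q})) = (\<Sum>Q\<in>?I. int (card {x\<in>N. compat x Q}))"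
    by (subst card_SigmaI) (use finI fN in auto)
  also have "\<dots> = (\<Sum>Q\<in>?I. c)"
  proof (rule sum.cong)
    fix Q assume "Q \<in> ?I"
    then show "int (card {x\<in>N. compat x Q}) = c" using cc False by (intro cc) (auto split: if_splits)
  qed simp
  also have "\<dots> = c * cntI K (k - 1) (p - (if e then 1 else 0))"
  proof (cases "k - 1 < 0 \<or> p - (if e then 1 else 0) < 0")
    case True
    then have I0: "?I = {}" using False by (auto split: if_splits)
    have "(\<Sum>Q\<in>?I. c) = 0" unfolding I0 by (rule sum.empty)
    moreover have "cntI K (k - 1) (p - (if e then 1 else 0)) = 0" using True unfolding cntI_def by simp
    ultimately show ?thesis by simp
  next
    case False2: False
    have "?I = {Q. valid K Q \<and> card Q = nat (k - 1) \<and> posc Q = nat (p - (if e then 1 else 0))}"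
      using False False2 by (auto split: if_splits)
    then show ?thesis using False2 unfolding cntI_def cnt_def by simp
  qed
  finally have S: "int (card (SIGMA Q:?I. {x\<in>N. compat x Q})) = c * cntI K (k - 1) (p - (if e then 1 else 0))" .
  have E: "cnt (K \<union> N) (nat k) (nat p) = cnt K (nat k) (nat p) + card (SIGMA Q:?I. {x\<in>N. compat x Q})"
    by (rule ext_split[OF fK fN disj att pe])
  have E2: "int (cnt (K \<union> N) (nat k) (nat p)) = int (cnt K (nat k) (nat p)) + int (card (SIGMA Q:?I. {x\<in>N. compat x Q}))"
    unfolding E by (rule of_nat_add)
  show ?thesis using False unfolding cntI_def E2 S by simp
qed


definition N1 :: "nat \<Rightarrow> (nat \<times> (nat + nat)) set" where
  "N1 n = {(Suc n, Inr d) | d. 1 \<le> d \<and> d \<le> n}"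
definition N2 :: "nat \<Rightarrow> (nat \<times> (nat + nat)) set" where
  "N2 n = {(i, Inl (Suc n)) | i. 1 \<le> i \<and> i \<le> Suc n}"

lemma cells_Suc: "cells (Suc n) = (cells n \<union> N1 n) \<union> N2 n"
  unfolding cells_def N1_def N2_def by (auto simp: le_Suc_eq less_Suc_eq)

lemma N1_fin: "finite (N1 n)"
proof -
  have "N1 n = (\<lambda>d. (Suc n, Inr d)) ` {1..n}" unfolding N1_def by auto
  then show ?thesis by simp
qed

lemma N2_fin: "finite (N2 n)"
proof -
  have "N2 n = (\<lambda>i. (i, Inl (Suc n))) ` {1..Suc n}" unfolding N2_def by auto
  then show ?thesis by simp
qed

lemma disj1: "cells n \<inter> N1 n = {}" unfolding cells_def N1_def by auto
lemma disj2: "(cells n \<union> N1 n) \<inter> N2 n = {}" unfolding cells_def N1_def N2_def by auto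

lemma valid_fst:
  assumes "valid K Q" "K \<subseteq> cells m"
  shows "fst ` Q \<subseteq> {1..m}" "card (fst ` Q) = card Q"
  using assms unfolding valid_def cells_def by (auto intro: card_image)

lemma posc_le:
  assumes "valid (cells n) Q"
  shows "card {d. Inr d \<in> snd ` Q} = posc Q" "{d. Inr d \<in> snd ` Q} \<subseteq> {1..n}"
proof -
  let ?P = "{x\<in>Q. \<not> isl (snd x)}"
  have "{d. Inr d \<in> snd ` Q} = (projr \<circ> snd) ` ?P"
    by (force simp: image_iff)
  moreover have ij: "inj_on (projr \<circ> snd) ?P"
  proof (rule inj_onI)
    fix x y assume "x \<in> ?P" "y \<in> ?P" "(projr \<circ> snd) x = (projr \<circ> snd) y"
    then have "snd x = snd y" by (metis comp_apply mem_Collect_eq sum.collapse(2))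
    then show "x = y" using assms \<open>x \<in> ?P\<close> \<open>y \<in> ?P\<close> unfolding valid_def inj_on_def by auto
  qed
  ultimately have "card {d. Inr d \<in> snd ` Q} = card ((projr \<circ> snd) ` ?P)" by simp
  also have "\<dots> = card ?P" by (rule card_image[OF ij])
  finally show "card {d. Inr d \<in> snd ` Q} = posc Q" unfolding posc_def .
  show "{d. Inr d \<in> snd ` Q} \<subseteq> {1..n}" using assms unfolding valid_def cells_def by auto
qed

lemma step1:
  "cntI (cells n \<union> N1 n) k p = cntI (cells n) k p + (int (Suc n) - p) * cntI (cells n) (k - 1) (p - 1)"
proof -
  have "cntI (cells n \<union> N1 n) k p = cntI (cells n) k p + (int (Suc n) - p) * cntI (cells n) (k - 1) (p - (if True then 1 else 0))"
  proof (rule ext_int[OF finite_cells N1_fin disj1])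
    show "\<forall>x\<in>N1 n. \<forall>y\<in>N1 n. fst x = fst y \<or> snd x = snd y" unfolding N1_def by auto
    show "\<forall>x\<in>N1 n. (\<not> isl (snd x)) = True" unfolding N1_def by auto
    fix Q assume v: "valid (cells n) Q" and pQ: "int (posc Q) = p - (if True then 1 else 0)"
    let ?D = "{d. Inr d \<in> snd ` Q}"
    have QK: "Q \<subseteq> cells n" using v unfolding valid_def by auto
    have "{x\<in>N1 n. compat x Q} = (\<lambda>d. (Suc n, Inr d)) ` ({1..n} - ?D)"
    proof (rule set_eqI, rule iffI)
      fix x assume x: "x \<in> {x\<in>N1 n. compat x Q}"
      then obtain d where d: "x = (Suc n, Inr d)" "1 \<le> d" "d \<le> n" unfolding N1_def by auto
      have "d \<notin> ?D"
      proof
        assume "d \<in> ?D"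
        then obtain y where "y \<in> Q" "snd y = Inr d" by force
        then show False using x d unfolding compat_def by auto
      qed
      then show "x \<in> (\<lambda>d. (Suc n, Inr d)) ` ({1..n} - ?D)" using d by auto
    next
      fix x :: "nat \<times> (nat + nat)" assume "x \<in> (\<lambda>d. (Suc n, Inr d)) ` ({1..n} - ?D)"
      then obtain d where d0: "d \<in> {1..n} - ?D" "x = (Suc n, Inr d)" by blast
      then have d: "x = (Suc n, Inr d)" "1 \<le> d" "d \<le> n" "d \<notin> ?D" by auto
      have "compat x Q" unfolding compat_def
      proof
        fix y assume y: "y \<in> Q"
        then have "fst y \<le> n" using QK unfolding cells_def by auto
        moreover have "snd y \<noteq> Inr d" using d(4) y by (auto simp: image_iff)
        ultimately show "fst y \<noteq> fst x \<and> snd y \<noteq> snd x" using d by auto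
      qed
      then show "x \<in> {x\<in>N1 n. compat x Q}" using d unfolding N1_def by auto
    qed
    then have "card {x\<in>N1 n. compat x Q} = card ({1..n} - ?D)"
      by (simp add: card_image inj_on_def)
    also have "\<dots> = n - posc Q" using posc_le[OF v] by (simp add: card_Diff_subset finite_subset)
    finally have "card {x\<in>N1 n. compat x Q} = n - posc Q" .
    moreover have "posc Q \<le> n" using posc_le[OF v] by (metis card_atLeastAtMost card_mono diff_Suc_1 finite_atLeastAtMost)
    ultimately show "int (card {x\<in>N1 n. compat x Q}) = int (Suc n) - p" using pQ by simp
  qed
  then show ?thesis by simp
qed

lemma step2:
  "cntI (cells (Suc n)) k p = cntI (cells n \<union> N1 n) k p + (int (Suc n) - k + 1) * cntI (cells n \<union> N1 n) (k - 1) p"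
proof -
  have "cntI ((cells n \<union> N1 n) \<union> N2 n) k p = cntI (cells n \<union> N1 n) k p + (int (Suc n) - k + 1) * cntI (cells n \<union> N1 n) (k - 1) (p - (if False then 1 else 0))"
  proof (rule ext_int[OF _ N2_fin disj2])
    show "finite (cells n \<union> N1 n)" using finite_cells N1_fin by simp
    show "\<forall>x\<in>N2 n. \<forall>y\<in>N2 n. fst x = fst y \<or> snd x = snd y" unfolding N2_def by auto
    show "\<forall>x\<in>N2 n. (\<not> isl (snd x)) = False" unfolding N2_def by auto
    fix Q assume v: "valid (cells n \<union> N1 n) Q" and cQ: "int (card Q) = k - 1"
    have sub: "cells n \<union> N1 n \<subseteq> cells (Suc n)" using cells_Suc by auto
    note vf = valid_fst[OF v sub]
    have QK: "Q \<subseteq> cells n \<union> N1 n" using v unfolding valid_def by auto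
    have "{x\<in>N2 n. compat x Q} = (\<lambda>i. (i, Inl (Suc n))) ` ({1..Suc n} - fst ` Q)"
    proof (rule set_eqI, rule iffI)
      fix x assume x: "x \<in> {x\<in>N2 n. compat x Q}"
      then obtain i where i: "x = (i, Inl (Suc n))" "1 \<le> i" "i \<le> Suc n" unfolding N2_def by auto
      have "i \<notin> fst ` Q"
      proof
        assume "i \<in> fst ` Q"
        then obtain y where "y \<in> Q" "fst y = i" by force
        then show False using x i unfolding compat_def by auto
      qed
      then show "x \<in> (\<lambda>i. (i, Inl (Suc n))) ` ({1..Suc n} - fst ` Q)" using i by auto
    next
      fix x :: "nat \<times> (nat + nat)" assume "x \<in> (\<lambda>i. (i, Inl (Suc n))) ` ({1..Suc n} - fst ` Q)"
      then obtain i where i0: "i \<in> {1..Suc n} - fst ` Q" "x = (i, Inl (Suc n))" by blast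
      then have i: "x = (i, Inl (Suc n))" "1 \<le> i" "i \<le> Suc n" "i \<notin> fst ` Q" by auto
      have "compat x Q" unfolding compat_def
      proof
        fix y assume y: "y \<in> Q"
        then have "snd y \<noteq> Inl (Suc n)" using QK unfolding cells_def N1_def by auto
        moreover have "fst y \<noteq> i" using i(4) y by (auto simp: image_iff)
        ultimately show "fst y \<noteq> fst x \<and> snd y \<noteq> snd x" using i by auto
      qed
      then show "x \<in> {x\<in>N2 n. compat x Q}" using i unfolding N2_def by auto
    qed
    then have "card {x\<in>N2 n. compat x Q} = card ({1..Suc n} - fst ` Q)"
      by (simp add: card_image inj_on_def)
    also have "\<dots> = Suc n - card Q" using vf by (simp add: card_Diff_subset finite_subset)
    finally have "card {x\<in>N2 n. compat x Q} = Suc n - card Q" .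
    moreover have "card Q \<le> Suc n" using vf by (metis card_atLeastAtMost card_mono diff_Suc_1 finite_atLeastAtMost)
    ultimately show "int (card {x\<in>N2 n. compat x Q}) = int (Suc n) - k + 1" using cQ by simp
  qed
  then show ?thesis using cells_Suc by simp
qed

lemma cnt_rec:
  "cntI (cells (Suc n)) k p = cntI (cells n) k p + (int (Suc n) - k + 1) * cntI (cells n) (k - 1) p
     + (int (Suc n) - p) * cntI (cells n) (k - 1) (p - 1)
     + (int (Suc n) - p) * (int (Suc n) - k + 1) * cntI (cells n) (k - 2) (p - 1)"
  unfolding step2 step1 by (simp add: algebra_simps)


definition psi :: "nat \<Rightarrow> nat \<times> nat \<Rightarrow> nat \<times> (nat + nat)" where
  "psi m x = (fst x, if snd x < fst x then Inr (fst x - snd x) else Inl (m + fst x - snd x))"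

definition phi :: "nat \<Rightarrow> nat \<times> (nat + nat) \<Rightarrow> nat \<times> nat" where
  "phi m y = (fst y, case snd y of Inl l \<Rightarrow> m + fst y - l | Inr d \<Rightarrow> fst y - d)"

lemma psi_a: "x \<in> board m \<Longrightarrow> psi m x \<in> cells m \<and> phi m (psi m x) = x"
  unfolding board_def cells_def psi_def phi_def by (cases x) auto

lemma psi_b: "y \<in> cells m \<Longrightarrow> phi m y \<in> board m \<and> psi m (phi m y) = y"
  unfolding board_def cells_def psi_def phi_def by auto

lemma psi_att: "x \<in> board m \<Longrightarrow> y \<in> board m \<Longrightarrow>
   attacks x y \<longleftrightarrow> x \<noteq> y \<and> (fst (psi m x) = fst (psi m y) \<or> snd (psi m x) = snd (psi m y))"
  unfolding board_def attacks_def psi_def by (cases x, cases y) auto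

lemma psi_pos: "x \<in> board m \<Longrightarrow> (snd x < fst x) \<longleftrightarrow> \<not> isl (snd (psi m x))"
  unfolding psi_def by auto

lemma psi_inj: "inj_on (psi m) (board m)"
  by (metis inj_onI psi_a)

lemma A_S_cnt: "A_S m k p = cntI (cells m) k p"
proof (cases "k < 0 \<or> p < 0")
  case True then show ?thesis unfolding A_S_def cntI_def by simp
next
  case False
  let ?X = "{B. B \<subseteq> board m \<and> card B = nat k \<and> non_attacking B \<and> card {x \<in> B. snd x < fst x} = nat p}"
  let ?Y = "{T. valid (cells m) T \<and> card T = nat k \<and> posc T = nat p}"
  have key: "psi m ` B \<in> ?Y" if B: "B \<in> ?X" for B
  proof -
    have Bb: "B \<subseteq> board m" using B by auto
    have ij: "inj_on (psi m) B" using psi_inj Bb inj_on_subset by blast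
    have c: "card (psi m ` B) = nat k" using B card_image[OF ij] by auto
    have s: "psi m ` B \<subseteq> cells m" using Bb psi_a by blast
    have na: "non_attacking B" using B by auto
    have i1: "inj_on fst (psi m ` B)"
    proof (rule inj_onI)
      fix a b assume "a \<in> psi m ` B" "b \<in> psi m ` B" "fst a = fst b"
      then obtain x y where "x \<in> B" "y \<in> B" "a = psi m x" "b = psi m y" "fst (psi m x) = fst (psi m y)" by auto
      then show "a = b" using na psi_att[of x m y] Bb unfolding non_attacking_def by blast
    qed
    have i2: "inj_on snd (psi m ` B)"
    proof (rule inj_onI)
      fix a b assume "a \<in> psi m ` B" "b \<in> psi m ` B" "snd a = snd b"
      then obtain x y where "x \<in> B" "y \<in> B" "a = psi m x" "b = psi m y" "snd (psi m x) = snd (psi m y)" by auto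
      then show "a = b" using na psi_att[of x m y] Bb unfolding non_attacking_def by blast
    qed
    have "{y \<in> psi m ` B. \<not> isl (snd y)} = psi m ` {x \<in> B. snd x < fst x}"
      using psi_pos Bb by auto
    then have "posc (psi m ` B) = card {x \<in> B. snd x < fst x}"
      unfolding posc_def using card_image inj_on_subset[OF ij] by (metis (no_types, lifting) mem_Collect_eq subsetI)
    then show ?thesis using c s i1 i2 B unfolding valid_def by auto
  qed
  have key2: "phi m ` T \<in> ?X" if T: "T \<in> ?Y" for T
  proof -
    have Tc: "T \<subseteq> cells m" using T unfolding valid_def by auto
    define B where "B = phi m ` T"
    have Bb: "B \<subseteq> board m" using Tc psi_b B_def by blast
    have TB: "T = psi m ` B" unfolding B_def image_image using Tc psi_b by force
    have ij: "inj_on (psi m) B" using psi_inj Bb inj_on_subset by blast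
    have c: "card B = nat k" using T card_image[OF ij] TB by auto
    have na: "non_attacking B" unfolding non_attacking_def
    proof (intro ballI)
      fix x y assume xy: "x \<in> B" "y \<in> B"
      have "psi m x \<in> T" "psi m y \<in> T" using xy TB by auto
      moreover have "inj_on fst T" "inj_on snd T" using T unfolding valid_def by auto
      ultimately show "\<not> attacks x y" using psi_att[of x m y] xy Bb ij
        unfolding inj_on_def by blast
    qed
    have "{y \<in> psi m ` B. \<not> isl (snd y)} = psi m ` {x \<in> B. snd x < fst x}"
      using psi_pos Bb by auto
    then have "posc (psi m ` B) = card {x \<in> B. snd x < fst x}"
      unfolding posc_def using card_image inj_on_subset[OF ij] by (metis (no_types, lifting) mem_Collect_eq subsetI)
    moreover have "posc T = nat p" using T by auto
    ultimately have "card {x \<in> B. snd x < fst x} = nat p" using TB by simp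
    then have "B \<in> ?X" using c Bb na by auto
    then show ?thesis unfolding B_def .
  qed
  have "bij_betw (image (psi m)) ?X ?Y"
  proof (rule bij_betw_byWitness[where f' = "image (phi m)"])
    show "\<forall>a\<in>?X. phi m ` psi m ` a = a"
    proof
      fix B assume "B \<in> ?X"
      then have "B \<subseteq> board m" by auto
      then show "phi m ` psi m ` B = B" unfolding image_image using psi_a by force
    qed
    show "\<forall>a\<in>?Y. psi m ` phi m ` a = a"
    proof
      fix T assume "T \<in> ?Y"
      then have "T \<subseteq> cells m" unfolding valid_def by auto
      then show "psi m ` phi m ` T = T" unfolding image_image using psi_b by force
    qed
    show "image (psi m) ` ?X \<subseteq> ?Y" using key by blast
    show "image (phi m) ` ?Y \<subseteq> ?X" using key2 by blast
  qed
  then have "card ?X = card ?Y" by (rule bij_betw_same_card)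
  then show ?thesis using False unfolding A_S_def cntI_def cnt_def by simp
qed

lemma A_S_rec:
  assumes "m \<ge> 1"
  shows "A_S m k p = A_S (m - 1) k p + (int m - k + 1) * A_S (m - 1) (k - 1) p
     + (int m - p) * A_S (m - 1) (k - 1) (p - 1)
     + (int m - p) * (int m - k + 1) * A_S (m - 1) (k - 2) (p - 1)"
proof -
  obtain n where m: "m = Suc n" using assms by (cases m) auto
  show ?thesis unfolding A_S_cnt m using cnt_rec[of n k p] by simp
qed


definition St :: "nat \<Rightarrow> int \<Rightarrow> int" where
  "St n r = (if r < 0 then 0 else int (Stirling n (nat r)))"

lemma St_ext: "Stirling2_ext (int n) r = St n r"
  unfolding Stirling2_ext_def St_def by (cases "n = 0") auto

lemma St_rec: "St (Suc n) r = St n (r - 1) + r * St n r"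
proof (cases "r \<le> 0")
  case True
  then show ?thesis unfolding St_def by (cases "r = 0") auto
next
  case False
  then obtain s where s: "r = int (Suc s)" by (metis int_nat_eq less_le_not_le nat_0_le not0_implies_Suc not_le of_nat_0 zero_less_imp_eq_int)
  have a: "nat r = Suc s" "nat (r - 1) = s" "\<not> r < 0" "\<not> r - 1 < 0" using s by auto
  show ?thesis unfolding St_def using a by (simp only: if_False Stirling.simps(4)) (simp add: s algebra_simps)
qed

lemma St_neg: "r < 0 \<Longrightarrow> St n r = 0" unfolding St_def by simp
lemma St_big: "int n < r \<Longrightarrow> St n r = 0" unfolding St_def by auto
lemma St_same: "St n (int n) = 1" unfolding St_def by auto

lemma ffi_0 [simp]: "ffact_int x 0 = 1" unfolding ffact_int_def by simp
lemma ffi_Suc: "ffact_int x (Suc j) = ffact_int x j * (x - int j)"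
  unfolding ffact_int_def by simp
lemma ffi_Suc': "ffact_int x (Suc j) = x * ffact_int (x - 1) j"
  unfolding ffact_int_def prod.lessThan_Suc_shift by (simp add: algebra_simps)

definition cc :: "nat \<Rightarrow> nat \<Rightarrow> nat \<Rightarrow> nat \<Rightarrow> int" where
  "cc m p q j = ffact_int (int m - int (p + q) + int j) j * int ((q - 1) choose j) * int ((p + q - j) choose q)"

definition G :: "nat \<Rightarrow> nat \<Rightarrow> nat \<Rightarrow> int" where
  "G m p q = (\<Sum>j\<le>p. cc m p q j * St (Suc m) (int m - int (p + q) + int j + 1))"

lemma sum_shift1: "(\<Sum>j\<le>p. f j) = (\<Sum>u\<le>Suc p. (if u = 0 then 0 else f (u - 1)))"
  by (subst sum.atMost_Suc_shift) simp

lemma sum_shift2: "(\<Sum>j\<le>p. f j) = (\<Sum>u\<le>Suc (Suc p). (if u < 2 then 0 else f (u - 2)))"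
  by (subst sum.atMost_Suc_shift, subst sum.atMost_Suc_shift) simp

lemma sum_ext1: "f (Suc p) = 0 \<Longrightarrow> (\<Sum>j\<le>p. f j) = (\<Sum>u\<le>Suc p. f u)"
  by simp

lemma cc_zero: assumes "1 \<le> q" "p < j" shows "cc m p q j = 0"
proof -
  have "p + q - j < q" using assms by arith
  then show ?thesis unfolding cc_def by simp
qed

lemma G0: "G m 0 q = St (Suc m) (int m - int q + 1)"
  unfolding G_def cc_def by simp

lemma G1: "G m p 1 = int (Suc p) * St (Suc m) (int m - int p)"
proof -
  have "G m p 1 = (\<Sum>j\<le>p. (if j = 0 then int (Suc p) * St (Suc m) (int m - int p) else 0))"
    unfolding G_def cc_def by (rule sum.cong) auto
  also have "\<dots> = int (Suc p) * St (Suc m) (int m - int p)" by (simp add: sum.delta)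
  finally show ?thesis .
qed


lemma absorb_int: "(int n - int k) * int (n choose k) = int n * int ((n - 1) choose k)"
proof (cases "k \<le> n")
  case True
  have "(n - k) * (n choose k) = n * ((n - 1) choose k)" by (rule binomial_absorb_comp)
  then have "int ((n - k) * (n choose k)) = int (n * ((n - 1) choose k))" by simp
  then show ?thesis using True by (simp add: of_nat_diff)
next
  case False
  have z1: "n choose k = 0" by (rule binomial_eq_0) (use False in simp)
  have z2: "(n - 1) choose k = 0" by (rule binomial_eq_0) (use False in simp)
  show ?thesis by (simp only: z1 z2 of_nat_0 mult_0_right)
qed

lemma alg_core:
  fixes r u q F a b c X Y :: int
  assumes R1: "u * (a + b) = (q - 1) * b" and R2: "(q - u) * (b + c) = (q - 1) * b"
    and R3: "(u - 1) * b = (q - u) * c"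
  shows "(r + u) * F * (a + b) * X + (r + u) * (F * (b + c) * (X + Y))
       = F * r * (a + b) * X + (r + 1) * (F * b * Y) + (r + q) * (F * (b + c) * X) + (r + q) * (F * c * Y)"
proof -
  have "(r + u) * F * (a + b) * X + (r + u) * (F * (b + c) * (X + Y))
       - (F * r * (a + b) * X + (r + 1) * (F * b * Y) + (r + q) * (F * (b + c) * X) + (r + q) * (F * c * Y))
     = F * X * (u * (a + b) - (q - 1) * b) - F * X * ((q - u) * (b + c) - (q - 1) * b) + F * Y * ((u - 1) * b - (q - u) * c)"
    by (simp add: algebra_simps)
  also have "\<dots> = 0" using R1 R2 R3 by simp
  finally show ?thesis by simp
qed


lemma point:
  assumes q: "q = Suc (Suc q0)" and u: "u \<le> Suc (Suc p0)"
  shows "cc (Suc n) (Suc p0) q u + (if u = 0 then 0 else (int n + 1 - int (Suc p0 + q) + int u) * cc (Suc n) (Suc p0) q (u - 1))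
   = cc n (Suc p0) q u + (int n + 1 - int (Suc p0 + q) + 1) * (if u = 0 then 0 else cc n (Suc p0) (q - 1) (u - 1))
     + (int n + 1 - int (Suc p0 + q) + int q) * (if u = 0 then 0 else cc n p0 q (u - 1))
     + (int n + 1 - int (Suc p0 + q) + int q) * (int n + 1 - int (Suc p0 + q) + 1) * (if u < 2 then 0 else cc n p0 (q - 1) (u - 2))"
proof (cases u)
  case 0
  then show ?thesis unfolding cc_def by simp
next
  case (Suc w)
  define r where "r = int n + 1 - int (Suc p0 + q)"
  define x where "x = r + int w"
  define N where "N = Suc p0 + q - u"
  define F1 where "F1 = ffact_int x w"
  define a where "a = int (q0 choose u)"
  define b where "b = int (q0 choose w)"
  define c where "c = (if w = 0 then 0 else int (q0 choose (w - 1)))"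
  define X where "X = int (N choose q)"
  define Y where "Y = int (N choose (q - 1))"
  have q1: "q - 1 = Suc q0" "q - 1 - 1 = q0" using q by auto
  have N1: "Suc p0 + q - w = Suc N" using u Suc q unfolding N_def by auto
  have N2: "Suc p0 + (q - 1) - w = N" "p0 + q - w = N" using u Suc q unfolding N_def by auto
  have e1: "cc (Suc n) (Suc p0) q u = (r + int u) * F1 * (a + b) * X"
  proof -
    have A: "int (Suc n) - int (Suc p0 + q) + int u = x + 1" unfolding x_def r_def Suc by simp
    have ab: "int (Suc q0 choose u) = a + b" unfolding a_def b_def Suc by simp
    have f: "ffact_int (x + 1) u = (r + int u) * F1" unfolding Suc ffi_Suc' F1_def x_def by simp
    have "cc (Suc n) (Suc p0) q u = ffact_int (x + 1) u * int (Suc q0 choose u) * X"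
      unfolding cc_def A q1 N_def X_def by simp
    then show ?thesis using f ab by simp
  qed
  have e2: "cc (Suc n) (Suc p0) q w = F1 * (b + c) * (X + Y)"
  proof -
    have A: "int (Suc n) - int (Suc p0 + q) + int w = x" unfolding x_def r_def by simp
    have B: "int (Suc q0 choose w) = b + c" unfolding b_def c_def by (cases w) auto
    have C: "int (Suc N choose q) = X + Y" unfolding X_def Y_def q by simp
    show ?thesis unfolding cc_def A q1 N1 B C F1_def by simp
  qed
  have e3: "cc n (Suc p0) q u = F1 * r * (a + b) * X"
  proof -
    have A: "int n - int (Suc p0 + q) + int u = x" unfolding x_def r_def Suc by simp
    have ab: "int (Suc q0 choose u) = a + b" unfolding a_def b_def Suc by simp
    have f: "ffact_int x u = F1 * r" unfolding Suc ffi_Suc F1_def x_def by simp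
    have "cc n (Suc p0) q u = ffact_int x u * int (Suc q0 choose u) * X"
      unfolding cc_def A q1 N_def X_def by simp
    then show ?thesis using f ab by simp
  qed
  have e4: "cc n (Suc p0) (q - 1) w = F1 * b * Y"
  proof -
    have A: "int n - int (Suc p0 + (q - 1)) + int w = x" unfolding x_def r_def using q by simp
    have "cc n (Suc p0) (q - 1) w = ffact_int (int n - int (Suc p0 + (q - 1)) + int w) w * int ((q - 1 - 1) choose w) * int ((Suc p0 + (q - 1) - w) choose (q - 1))"
      by (simp only: cc_def)
    also have "\<dots> = F1 * b * Y" by (simp only: A q1(2) N2(1)) (simp add: F1_def b_def Y_def)
    finally show ?thesis .
  qed
  have e5: "cc n p0 q w = F1 * (b + c) * X"
  proof -
    have A: "int n - int (p0 + q) + int w = x" unfolding x_def r_def by simp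
    have B: "int (Suc q0 choose w) = b + c" unfolding b_def c_def by (cases w) auto
    show ?thesis unfolding cc_def A q1 N2 B F1_def X_def by simp
  qed
  have e6: "(r + 1) * (if u < 2 then 0 else cc n p0 (q - 1) (u - 2)) = F1 * c * Y"
  proof (cases w)
    case 0
    then show ?thesis using Suc unfolding c_def by simp
  next
    case (Suc v)
    have A: "int n - int (p0 + (q - 1)) + int v = x" unfolding x_def r_def using q Suc by simp
    have N3: "p0 + (q - 1) - v = N" using u \<open>u = Suc w\<close> Suc q unfolding N_def by auto
    have FF: "F1 = ffact_int x v * (r + 1)" unfolding F1_def Suc ffi_Suc x_def by simp
    have "cc n p0 (q - 1) v = ffact_int (int n - int (p0 + (q - 1)) + int v) v * int ((q - 1 - 1) choose v) * int ((p0 + (q - 1) - v) choose (q - 1))"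
      by (simp only: cc_def)
    also have "\<dots> = ffact_int x v * int (q0 choose v) * Y" by (simp only: A q1(2) N3) (simp add: Y_def)
    finally have "cc n p0 (q - 1) v = ffact_int x v * int (q0 choose v) * Y" .
    then show ?thesis using \<open>u = Suc w\<close> Suc FF unfolding c_def by simp
  qed
  have R1: "int u * (a + b) = (int q - 1) * b"
  proof -
    have "Suc w * (Suc q0 choose Suc w) = Suc q0 * (q0 choose w)" by (rule Suc_times_binomial)
    then have "int (Suc w) * int (Suc q0 choose Suc w) = int (Suc q0) * int (q0 choose w)"
      by (metis of_nat_mult)
    moreover have "int (Suc q0 choose Suc w) = a + b" unfolding a_def b_def Suc by simp
    ultimately show ?thesis unfolding Suc q b_def by (simp add: add.commute)
  qed
  have R2: "(int q - int u) * (b + c) = (int q - 1) * b"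
  proof -
    have "(int (Suc q0) - int w) * int (Suc q0 choose w) = int (Suc q0) * int ((Suc q0 - 1) choose w)"
      by (rule absorb_int)
    moreover have "int (Suc q0 choose w) = b + c" unfolding b_def c_def by (cases w) auto
    ultimately show ?thesis unfolding Suc q b_def by (simp add: algebra_simps)
  qed
  have R3: "(int u - 1) * b = (int q - int u) * c"
  proof (cases w)
    case 0
    then show ?thesis unfolding c_def Suc by simp
  next
    case (Suc v)
    have "Suc v * (q0 choose Suc v) = q0 * ((q0 - 1) choose (Suc v - 1))"
      by (rule times_binomial_minus1_eq) simp
    then have 1: "int (Suc v) * int (q0 choose Suc v) = int q0 * int ((q0 - 1) choose v)"
      by (metis diff_Suc_1 of_nat_mult)
    have 2: "(int q0 - int v) * int (q0 choose v) = int q0 * int ((q0 - 1) choose v)"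
      by (rule absorb_int)
    show ?thesis using 1 2 unfolding c_def b_def \<open>u = Suc w\<close> Suc q by simp
  qed
  have core: "(r + int u) * F1 * (a + b) * X + (r + int u) * (F1 * (b + c) * (X + Y))
       = F1 * r * (a + b) * X + (r + 1) * (F1 * b * Y) + (r + int q) * (F1 * (b + c) * X) + (r + int q) * (F1 * c * Y)"
    by (rule alg_core[OF R1 R2 R3])
  have L: "cc (Suc n) (Suc p0) q u + (if u = 0 then 0 else (r + int u) * cc (Suc n) (Suc p0) q (u - 1))
      = (r + int u) * F1 * (a + b) * X + (r + int u) * (F1 * (b + c) * (X + Y))"
    using e1 e2 Suc by simp
  have R: "cc n (Suc p0) q u + (r + 1) * (if u = 0 then 0 else cc n (Suc p0) (q - 1) (u - 1))
     + (r + int q) * (if u = 0 then 0 else cc n p0 q (u - 1))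
     + (r + int q) * (r + 1) * (if u < 2 then 0 else cc n p0 (q - 1) (u - 2))
     = F1 * r * (a + b) * X + (r + 1) * (F1 * b * Y) + (r + int q) * (F1 * (b + c) * X) + (r + int q) * (F1 * c * Y)"
  proof -
    have "(r + int q) * (r + 1) * (if u < 2 then 0 else cc n p0 (q - 1) (u - 2))
        = (r + int q) * ((r + 1) * (if u < 2 then 0 else cc n p0 (q - 1) (u - 2)))" by simp
    also have "\<dots> = (r + int q) * (F1 * c * Y)" using e6 by simp
    finally have 4: "(r + int q) * (r + 1) * (if u < 2 then 0 else cc n p0 (q - 1) (u - 2)) = (r + int q) * (F1 * c * Y)" .
    show ?thesis unfolding 4 using e3 e4 e5 Suc by simp
  qed
  have "cc (Suc n) (Suc p0) q u + (if u = 0 then 0 else (r + int u) * cc (Suc n) (Suc p0) q (u - 1))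
     = cc n (Suc p0) q u + (r + 1) * (if u = 0 then 0 else cc n (Suc p0) (q - 1) (u - 1))
     + (r + int q) * (if u = 0 then 0 else cc n p0 q (u - 1))
     + (r + int q) * (r + 1) * (if u < 2 then 0 else cc n p0 (q - 1) (u - 2))"
    unfolding L R by (rule core)
  then show ?thesis unfolding r_def .
qed


lemma comb4: "(\<Sum>u\<in>A. a u * S u) + k1 * (\<Sum>u\<in>A. b u * S u) + k2 * (\<Sum>u\<in>A. c u * S u) + k3 * (\<Sum>u\<in>A. d u * S u)
   = (\<Sum>u\<in>A. (a u + k1 * b u + k2 * c u + k3 * d u) * (S u :: int))"
  by (simp add: sum_distrib_left sum.distrib algebra_simps)

lemma SS2: "\<not> x < 2 \<Longrightarrow> Suc (Suc (x - 2)) = x" by arith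

lemma G_rec:
  fixes n p0 q q0 :: nat
  assumes q: "q = Suc (Suc q0)"
  defines "r \<equiv> int n + 1 - int (Suc p0 + q)"
  shows "G (Suc n) (Suc p0) q = G n (Suc p0) q + (r + 1) * G n (Suc p0) (q - 1)
           + (r + int q) * G n p0 q + (r + int q) * (r + 1) * G n p0 (q - 1)"
proof -
  define p where "p = Suc p0"
  define S where "S u = St (Suc n) (r + int u)" for u :: nat
  have q1: "1 \<le> q" "1 \<le> q - 1" using q by auto
  have A: "(\<Sum>j\<le>p. cc (Suc n) p q j * S j) = (\<Sum>u\<le>Suc p. cc (Suc n) p q u * S u)"
    by (rule sum_ext1) (simp add: cc_zero[OF q1(1)])
  have B: "(\<Sum>j\<le>p. cc (Suc n) p q j * ((r + int j + 1) * S (Suc j)))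
      = (\<Sum>u\<le>Suc p. (if u = 0 then 0 else (r + int u) * cc (Suc n) p q (u - 1)) * S u)"
    by (subst sum_shift1) (rule sum.cong, auto simp: algebra_simps)
  have LHS: "G (Suc n) p q = (\<Sum>u\<le>Suc p. (cc (Suc n) p q u + (if u = 0 then 0 else (r + int u) * cc (Suc n) p q (u - 1))) * S u)"
  proof -
    have "G (Suc n) p q = (\<Sum>j\<le>p. cc (Suc n) p q j * (S j + (r + int j + 1) * S (Suc j)))"
      unfolding G_def
    proof (rule sum.cong)
      fix j assume "j \<in> {..p}"
      have "St (Suc (Suc n)) (int (Suc n) - int (p + q) + int j + 1) = St (Suc n) (r + int j) + (r + int j + 1) * St (Suc n) (r + int j + 1)"
        using St_rec[of "Suc n" "r + int j + 1"] unfolding r_def p_def by (simp add: algebra_simps)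
      then show "cc (Suc n) p q j * St (Suc (Suc n)) (int (Suc n) - int (p + q) + int j + 1) = cc (Suc n) p q j * (S j + (r + int j + 1) * S (Suc j))"
        unfolding S_def by (simp add: algebra_simps)
    qed simp
    also have "\<dots> = (\<Sum>j\<le>p. cc (Suc n) p q j * S j) + (\<Sum>j\<le>p. cc (Suc n) p q j * ((r + int j + 1) * S (Suc j)))"
      by (simp add: distrib_left sum.distrib)
    also have "\<dots> = (\<Sum>u\<le>Suc p. cc (Suc n) p q u * S u) + (\<Sum>u\<le>Suc p. (if u = 0 then 0 else (r + int u) * cc (Suc n) p q (u - 1)) * S u)"
      unfolding A B ..
    also have "\<dots> = (\<Sum>u\<le>Suc p. (cc (Suc n) p q u + (if u = 0 then 0 else (r + int u) * cc (Suc n) p q (u - 1))) * S u)"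
      by (simp add: distrib_right sum.distrib)
    finally show ?thesis .
  qed
  have R1: "G n p q = (\<Sum>u\<le>Suc p. cc n p q u * S u)"
  proof -
    have "G n p q = (\<Sum>j\<le>p. cc n p q j * S j)"
      unfolding G_def S_def r_def p_def by (rule sum.cong) (auto simp: algebra_simps)
    also have "\<dots> = (\<Sum>u\<le>Suc p. cc n p q u * S u)"
      by (rule sum_ext1) (simp add: cc_zero[OF q1(1)])
    finally show ?thesis .
  qed
  have R2: "G n p (q - 1) = (\<Sum>u\<le>Suc p. (if u = 0 then 0 else cc n p (q - 1) (u - 1)) * S u)"
  proof -
    have "G n p (q - 1) = (\<Sum>j\<le>p. cc n p (q - 1) j * S (Suc j))"
      unfolding G_def S_def r_def p_def using q by (intro sum.cong) (auto simp: algebra_simps)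
    also have "\<dots> = (\<Sum>u\<le>Suc p. (if u = 0 then 0 else cc n p (q - 1) (u - 1)) * S u)"
      by (subst sum_shift1) (rule sum.cong, auto)
    finally show ?thesis .
  qed
  have R3: "G n p0 q = (\<Sum>u\<le>Suc p. (if u = 0 then 0 else cc n p0 q (u - 1)) * S u)"
  proof -
    have "G n p0 q = (\<Sum>j\<le>p0. cc n p0 q j * S (Suc j))"
      unfolding G_def S_def r_def p_def using q by (intro sum.cong) (auto simp: algebra_simps)
    also have "\<dots> = (\<Sum>u\<le>p. (if u = 0 then 0 else cc n p0 q (u - 1)) * S u)"
      unfolding p_def by (subst sum_shift1) (rule sum.cong, auto)
    also have "\<dots> = (\<Sum>u\<le>Suc p. (if u = 0 then 0 else cc n p0 q (u - 1)) * S u)"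
      by (rule sum_ext1) (simp add: cc_zero[OF q1(1)] p_def)
    finally show ?thesis .
  qed
  have R4: "G n p0 (q - 1) = (\<Sum>u\<le>Suc p. (if u < 2 then 0 else cc n p0 (q - 1) (u - 2)) * S u)"
  proof -
    have "G n p0 (q - 1) = (\<Sum>j\<le>p0. cc n p0 (q - 1) j * S (Suc (Suc j)))"
      unfolding G_def S_def r_def p_def using q by (intro sum.cong) (auto simp: algebra_simps)
    also have "\<dots> = (\<Sum>u\<le>Suc p. (if u < 2 then 0 else cc n p0 (q - 1) (u - 2)) * S u)"
      unfolding p_def by (subst sum_shift2) (rule sum.cong, auto simp: SS2)
    finally show ?thesis .
  qed
  have "G n p q + (r + 1) * G n p (q - 1) + (r + int q) * G n p0 q + (r + int q) * (r + 1) * G n p0 (q - 1)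
     = (\<Sum>u\<le>Suc p. (cc n p q u + (r + 1) * (if u = 0 then 0 else cc n p (q - 1) (u - 1))
         + (r + int q) * (if u = 0 then 0 else cc n p0 q (u - 1))
         + (r + int q) * (r + 1) * (if u < 2 then 0 else cc n p0 (q - 1) (u - 2))) * S u)"
    unfolding R1 R2 R3 R4 by (rule comb4)
  also have "\<dots> = (\<Sum>u\<le>Suc p. (cc (Suc n) p q u + (if u = 0 then 0 else (r + int u) * cc (Suc n) p q (u - 1))) * S u)"
  proof (rule sum.cong)
    fix u assume "u \<in> {..Suc p}"
    then have "u \<le> Suc (Suc p0)" unfolding p_def by simp
    from point[OF q this, of n] show "(cc n p q u + (r + 1) * (if u = 0 then 0 else cc n p (q - 1) (u - 1))
         + (r + int q) * (if u = 0 then 0 else cc n p0 q (u - 1))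
         + (r + int q) * (r + 1) * (if u < 2 then 0 else cc n p0 (q - 1) (u - 2))) * S u
       = (cc (Suc n) p q u + (if u = 0 then 0 else (r + int u) * cc (Suc n) p q (u - 1))) * S u"
      unfolding r_def p_def by simp
  qed simp
  finally have fin: "G n p q + (r + 1) * G n p (q - 1) + (r + int q) * G n p0 q + (r + int q) * (r + 1) * G n p0 (q - 1)
     = (\<Sum>u\<le>Suc p. (cc (Suc n) p q u + (if u = 0 then 0 else (r + int u) * cc (Suc n) p q (u - 1))) * S u)" .
  have "G (Suc n) p q = G n p q + (r + 1) * G n p (q - 1) + (r + int q) * G n p0 q + (r + int q) * (r + 1) * G n p0 (q - 1)"
    by (rule trans[OF LHS fin[symmetric]])
  then show ?thesis unfolding p_def .
qed


definition Phi :: "nat \<Rightarrow> int \<Rightarrow> int \<Rightarrow> int" where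
  "Phi m k p = (if k < 0 \<or> p < 0 \<or> k < p then 0 else if p = k then St m (int m - k)
                 else G m (nat p) (nat (k - p)))"

lemma Phi_rec_eq:
  fixes K :: nat
  shows "Phi (Suc n) (int K) (int K) = Phi n (int K) (int K) + (int (Suc n) - int K + 1) * Phi n (int K - 1) (int K)
     + (int (Suc n) - int K) * Phi n (int K - 1) (int K - 1)
     + (int (Suc n) - int K) * (int (Suc n) - int K + 1) * Phi n (int K - 2) (int K - 1)"
proof (cases K)
  case 0
  then show ?thesis unfolding Phi_def using St_same[of n] St_same[of "Suc n"] by simp
next
  case (Suc K0)
  have "St (Suc n) (int (Suc n) - int K) = St n (int n - int K) + (int (Suc n) - int K) * St n (int (Suc n) - int K)"
    using St_rec[of n "int (Suc n) - int K"] by (simp add: algebra_simps)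
  then show ?thesis unfolding Phi_def using Suc by (simp add: algebra_simps)
qed

lemma Phi_rec_q1:
  fixes K0 :: nat
  defines "K \<equiv> Suc K0"
  shows "Phi (Suc n) (int K) (int K - 1) = Phi n (int K) (int K - 1) + (int (Suc n) - int K + 1) * Phi n (int K - 1) (int K - 1)
     + (int (Suc n) - (int K - 1)) * Phi n (int K - 1) (int K - 1 - 1)
     + (int (Suc n) - (int K - 1)) * (int (Suc n) - int K + 1) * Phi n (int K - 2) (int K - 1 - 1)"
proof -
  have a: "Phi (Suc n) (int K) (int K - 1) = int K * St (Suc (Suc n)) (int n + 2 - int K)"
    unfolding Phi_def K_def using G1[of "Suc n" K0] by (simp add: algebra_simps)
  have b: "Phi n (int K) (int K - 1) = int K * St (Suc n) (int n + 1 - int K)"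
    unfolding Phi_def K_def using G1[of n K0] by simp
  have c: "Phi n (int K - 1) (int K - 1) = St n (int n + 1 - int K)"
    unfolding Phi_def K_def by (simp add: algebra_simps)
  have d: "Phi n (int K - 1) (int K - 1 - 1) = (int K - 1) * St (Suc n) (int n + 2 - int K)"
  proof (cases K0)
    case 0 then show ?thesis unfolding Phi_def K_def by simp
  next
    case (Suc K1)
    then show ?thesis unfolding Phi_def K_def using G1[of n K1] by (simp add: algebra_simps)
  qed
  have e: "Phi n (int K - 2) (int K - 1 - 1) = St n (int n + 2 - int K)"
  proof (cases K0)
    case 0 then show ?thesis unfolding Phi_def K_def by (simp add: St_big)
  next
    case (Suc K1)
    then show ?thesis unfolding Phi_def K_def by (simp add: algebra_simps)
  qed
  have s1: "St (Suc (Suc n)) (int n + 2 - int K) = St (Suc n) (int n + 1 - int K) + (int n + 2 - int K) * St (Suc n) (int n + 2 - int K)"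
    using St_rec[of "Suc n" "int n + 2 - int K"] by (simp add: algebra_simps)
  have s2: "St (Suc n) (int n + 2 - int K) = St n (int n + 1 - int K) + (int n + 2 - int K) * St n (int n + 2 - int K)"
    using St_rec[of n "int n + 2 - int K"] by (simp add: algebra_simps)
  show ?thesis unfolding a b c d e s1 s2 by (simp add: algebra_simps)
qed


lemma Phi_rec_gen:
  fixes P Q0 :: nat
  defines "Q \<equiv> Suc (Suc Q0)"
  defines "k \<equiv> int P + int Q" and "p \<equiv> int P"
  shows "Phi (Suc n) k p = Phi n k p + (int (Suc n) - k + 1) * Phi n (k - 1) p
     + (int (Suc n) - p) * Phi n (k - 1) (p - 1)
     + (int (Suc n) - p) * (int (Suc n) - k + 1) * Phi n (k - 2) (p - 1)"
proof (cases P)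
  case 0
  have a: "Phi (Suc n) k p = St (Suc (Suc n)) (int n + 2 - int Q)"
  proof -
    have "nat (k - p) = Q" "nat p = 0" "\<not> k < 0" "\<not> p < 0" "\<not> k < p" "p \<noteq> k" unfolding k_def p_def Q_def 0 by simp_all
    then have "Phi (Suc n) k p = G (Suc n) 0 Q" unfolding Phi_def by simp
    then show ?thesis unfolding G0 by (simp add: algebra_simps)
  qed
  have b: "Phi n k p = St (Suc n) (int n + 1 - int Q)"
  proof -
    have "nat (k - p) = Q" "nat p = 0" "\<not> k < 0" "\<not> p < 0" "\<not> k < p" "p \<noteq> k" unfolding k_def p_def Q_def 0 by simp_all
    then have "Phi n k p = G n 0 Q" unfolding Phi_def by simp
    then show ?thesis unfolding G0 by (simp add: algebra_simps)
  qed
  have c: "Phi n (k - 1) p = St (Suc n) (int n + 2 - int Q)"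
  proof -
    have "nat (k - 1 - p) = Suc Q0" "nat p = 0" "\<not> k - 1 < 0" "\<not> p < 0" "\<not> k - 1 < p" "p \<noteq> k - 1" unfolding k_def p_def Q_def 0 by simp_all
    then have "Phi n (k - 1) p = G n 0 (Suc Q0)" unfolding Phi_def by simp
    then show ?thesis unfolding G0 Q_def by (simp add: algebra_simps)
  qed
  have d: "Phi n (k - 1) (p - 1) = 0" "Phi n (k - 2) (p - 1) = 0" unfolding Phi_def p_def 0 by simp_all
  have s: "St (Suc (Suc n)) (int n + 2 - int Q) = St (Suc n) (int n + 1 - int Q) + (int n + 2 - int Q) * St (Suc n) (int n + 2 - int Q)"
    using St_rec[of "Suc n" "int n + 2 - int Q"] by (simp add: algebra_simps)
  show ?thesis unfolding a b c d s by (simp add: k_def p_def 0 algebra_simps)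
next
  case (Suc P0)
  have g: "G (Suc n) (Suc P0) Q = G n (Suc P0) Q + (int n + 1 - int (Suc P0 + Q) + 1) * G n (Suc P0) (Q - 1)
           + (int n + 1 - int (Suc P0 + Q) + int Q) * G n P0 Q + (int n + 1 - int (Suc P0 + Q) + int Q) * (int n + 1 - int (Suc P0 + Q) + 1) * G n P0 (Q - 1)"
    by (rule G_rec) (simp add: Q_def)
  have nn: "nat (k - p) = Q" "nat p = Suc P0" "\<not> k < 0" "\<not> p < 0" "\<not> k < p" "p \<noteq> k"
    unfolding k_def p_def Q_def Suc by simp_all
  have a: "Phi (Suc n) k p = G (Suc n) (Suc P0) Q" unfolding Phi_def using nn by simp
  have b: "Phi n k p = G n (Suc P0) Q" unfolding Phi_def using nn by simp
  have c: "Phi n (k - 1) p = G n (Suc P0) (Q - 1)"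
  proof -
    have "nat (k - 1 - p) = Q - 1" "nat p = Suc P0" unfolding k_def p_def Q_def Suc by simp_all
    then show ?thesis unfolding Phi_def using Suc unfolding k_def p_def Q_def by simp
  qed
  have d: "Phi n (k - 1) (p - 1) = G n P0 Q"
  proof -
    have "nat (k - 1 - (p - 1)) = Q" "nat (p - 1) = P0" unfolding k_def p_def Q_def Suc by simp_all
    then show ?thesis unfolding Phi_def using Suc unfolding k_def p_def Q_def by simp
  qed
  have e: "Phi n (k - 2) (p - 1) = G n P0 (Q - 1)"
  proof -
    have "nat (k - 2 - (p - 1)) = Q - 1" "nat (p - 1) = P0" unfolding k_def p_def Q_def Suc by simp_all
    then show ?thesis unfolding Phi_def using Suc unfolding k_def p_def Q_def by simp
  qed
  have co: "int (Suc n) - k + 1 = int n + 1 - int (Suc P0 + Q) + 1" "int (Suc n) - p = int n + 1 - int (Suc P0 + Q) + int Q"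
    unfolding k_def p_def Suc by simp_all
  show ?thesis unfolding a b c d e co g ..
qed


lemma Phi_rec:
  assumes k: "0 \<le> k" and p: "0 \<le> p"
  shows "Phi (Suc n) k p = Phi n k p + (int (Suc n) - k + 1) * Phi n (k - 1) p
     + (int (Suc n) - p) * Phi n (k - 1) (p - 1)
     + (int (Suc n) - p) * (int (Suc n) - k + 1) * Phi n (k - 2) (p - 1)"
proof -
  consider "k < p" | "p = k" | "p = k - 1" | "p \<le> k - 2" by linarith
  then show ?thesis
  proof cases
    case 1
    then show ?thesis unfolding Phi_def by simp
  next
    case 2
    define K where "K = nat k"
    have K: "k = int K" using k unfolding K_def by simp
    show ?thesis using Phi_rec_eq[of n K] unfolding 2 K .
  next
    case 3
    then have "1 \<le> k" using p by simp
    define K0 where "K0 = nat (k - 1)"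
    have K: "k = int (Suc K0)" using \<open>1 \<le> k\<close> unfolding K0_def by simp
    show ?thesis using Phi_rec_q1[of n K0] unfolding 3 K by simp
  next
    case 4
    define P where "P = nat p"
    have P: "p = int P" using p unfolding P_def by simp
    define Q0 where "Q0 = nat (k - p - 2)"
    have Q: "k - p - 2 = int Q0" using 4 unfolding Q0_def by simp
    have kk: "k = int P + int (Suc (Suc Q0))" using P Q by simp
    show ?thesis using Phi_rec_gen[of n P Q0] unfolding kk P by simp
  qed
qed

lemma A0: "A_S 0 k p = (if k < 0 \<or> p < 0 then 0 else if k = 0 \<and> p = 0 then 1 else 0)"
proof -
  have b: "board 0 = {}" unfolding board_def by simp
  have "{B. B \<subseteq> board 0 \<and> card B = nat k \<and> non_attacking B \<and> card {x \<in> B. snd x < fst x} = nat p}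
      = (if nat k = 0 \<and> nat p = 0 then {{}} else {})"
    unfolding b by (auto simp: non_attacking_def)
  then show ?thesis unfolding A_S_def by auto
qed

lemma Phi0: "Phi 0 k p = (if k < 0 \<or> p < 0 then 0 else if k = 0 \<and> p = 0 then 1 else 0)"
proof (cases "k < 0 \<or> p < 0 \<or> k < p")
  case True then show ?thesis unfolding Phi_def by auto
next
  case False
  show ?thesis
  proof (cases "p = k")
    case True
    then show ?thesis using False unfolding Phi_def St_def by auto
  next
    case False2: False
    have "G 0 (nat p) (nat (k - p)) = 0" unfolding G_def
    proof (rule sum.neutral, rule ballI)
      fix j assume "j \<in> {..nat p}"
      then have "0 - int (nat p + nat (k - p)) + int j + 1 \<le> 0" using False False2 by auto
      then have "St (Suc 0) (0 - int (nat p + nat (k - p)) + int j + 1) = 0"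
        unfolding St_def by (cases "0 - int (nat p + nat (k - p)) + int j + 1 = 0") auto
      then show "cc 0 (nat p) (nat (k - p)) j * St (Suc 0) (int 0 - int (nat p + nat (k - p)) + int j + 1) = 0" by simp
    qed
    then show ?thesis using False False2 unfolding Phi_def by auto
  qed
qed

lemma A_Phi: "A_S m k p = Phi m k p"
proof (induction m arbitrary: k p)
  case 0
  then show ?case unfolding A0 Phi0 ..
next
  case (Suc n)
  show ?case
  proof (cases "k < 0 \<or> p < 0")
    case True
    then show ?thesis unfolding A_S_def Phi_def by auto
  next
    case False
    have "A_S (Suc n) k p = A_S n k p + (int (Suc n) - k + 1) * A_S n (k - 1) p
     + (int (Suc n) - p) * A_S n (k - 1) (p - 1)
     + (int (Suc n) - p) * (int (Suc n) - k + 1) * A_S n (k - 2) (p - 1)"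
      using A_S_rec[of "Suc n" k p] by simp
    also have "\<dots> = Phi (Suc n) k p" unfolding Suc.IH using Phi_rec[of k p n] False by simp
    finally show ?thesis .
  qed
qed


lemma ffi_nat: "ffact_int (int n) j = fact j * int (n choose j)"
proof (induction j)
  case 0 then show ?case by simp
next
  case (Suc j)
  have a: "int (Suc j) * int (n choose Suc j) = int n * int ((n - 1) choose j)"
  proof -
    have "Suc j * (n choose Suc j) = n * ((n - 1) choose (Suc j - 1))"
      by (rule times_binomial_minus1_eq) simp
    then show ?thesis by (metis diff_Suc_1 of_nat_mult)
  qed
  have b: "(int n - int j) * int (n choose j) = int n * int ((n - 1) choose j)" by (rule absorb_int)
  have "ffact_int (int n) (Suc j) = fact j * int (n choose j) * (int n - int j)"
    unfolding ffi_Suc Suc.IH ..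
  also have "\<dots> = fact j * (int (Suc j) * int (n choose Suc j))" using a b by (simp add: algebra_simps)
  also have "\<dots> = fact (Suc j) * int (n choose Suc j)" by (simp add: algebra_simps)
  finally show ?case .
qed

lemma binom_nat: "binom_ext (int n) (int j) = int (n choose j)"
  unfolding binom_ext_def ffi_nat by simp

lemma ffi_m1: "ffact_int (-1) j = (-1) ^ j * fact j"
proof (induction j)
  case 0 then show ?case by simp
next
  case (Suc j)
  show ?case unfolding ffi_Suc Suc.IH by (simp add: algebra_simps)
qed

lemma binom_m1: "binom_ext (-1) (int j) = (-1) ^ j"
  unfolding binom_ext_def ffi_m1 by simp

lemma binom_0: "binom_ext x 0 = 1"
  unfolding binom_ext_def by simp

lemma tele: "St n r = (\<Sum>j\<le>J. (-1) ^ j * ffact_int (r + int j) j * St (Suc n) (r + int j + 1))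
   + (-1) ^ Suc J * ffact_int (r + int J + 1) (Suc J) * St n (r + int J + 1)"
proof (induction J)
  case 0
  have "St (Suc n) (r + 1) = St n r + (r + 1) * St n (r + 1)" using St_rec[of n "r + 1"] by simp
  then show ?case unfolding ffi_Suc by (simp add: algebra_simps)
next
  case (Suc J)
  have s: "St n (r + int J + 1) = St (Suc n) (r + int J + 2) - (r + int J + 2) * St n (r + int J + 2)"
    using St_rec[of n "r + int J + 2"] by (simp add: algebra_simps)
  have f: "ffact_int (r + int (Suc J) + 1) (Suc (Suc J)) = (r + int J + 2) * ffact_int (r + int J + 1) (Suc J)"
    unfolding ffi_Suc'[of _ "Suc J"] by (simp add: algebra_simps)
  show ?case unfolding Suc.IH s sum.atMost_Suc f by (simp add: algebra_simps)
qed

lemma sum_formula: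
  fixes m k p :: nat
  shows "A_S m (int k) (int p) =
        (\<Sum>j=0..p. ffact_int (int m - int k + int j) j
                   * binom_ext (int k - int p - 1) (int j)
                   * binom_ext (int k - int j) (int k - int p)
                   * Stirling2_ext (int m + 1) (int m - int k + int j + 1))"
proof -
  have SE: "Stirling2_ext (int m + 1) x = St (Suc m) x" for x using St_ext[of "Suc m" x] by (simp add: add.commute)
  consider "k < p" | "p = k" | "p < k" by linarith
  then show ?thesis
  proof cases
    case 1
    have "A_S m (int k) (int p) = 0" unfolding A_Phi Phi_def using 1 by simp
    moreover have "(\<Sum>j=0..p. ffact_int (int m - int k + int j) j
                   * binom_ext (int k - int p - 1) (int j)
                   * binom_ext (int k - int j) (int k - int p)
                   * Stirling2_ext (int m + 1) (int m - int k + int j + 1)) = 0"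
    proof (rule sum.neutral, rule ballI)
      fix j assume j: "j \<in> {0..p}"
      show "ffact_int (int m - int k + int j) j
                   * binom_ext (int k - int p - 1) (int j)
                   * binom_ext (int k - int j) (int k - int p)
                   * Stirling2_ext (int m + 1) (int m - int k + int j + 1) = 0"
      proof (cases "j \<le> k")
        case True
        then have "binom_ext (int k - int j) (int k - int p) = 0" unfolding binom_ext_def using 1 by auto
        then show ?thesis by simp
      next
        case False
        then have "St (Suc m) (int m - int k + int j + 1) = 0" by (intro St_big) simp
        then show ?thesis unfolding SE by simp
      qed
    qed
    ultimately show ?thesis by simp
  next
    case 2
    have "A_S m (int k) (int p) = St m (int m - int k)" unfolding A_Phi Phi_def 2 by simp
    also have "\<dots> = (\<Sum>j\<le>k. (-1) ^ j * ffact_int (int m - int k + int j) j * St (Suc m) (int m - int k + int j + 1))"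
      using tele[of m "int m - int k" k] St_big[of m "int m - int k + int k + 1"] by simp
    also have "\<dots> = (\<Sum>j=0..p. ffact_int (int m - int k + int j) j
                   * binom_ext (int k - int p - 1) (int j)
                   * binom_ext (int k - int j) (int k - int p)
                   * Stirling2_ext (int m + 1) (int m - int k + int j + 1))"
      unfolding 2 atLeast0AtMost SE using binom_m1 binom_0 by (intro sum.cong) auto
    finally show ?thesis .
  next
    case 3
    have "A_S m (int k) (int p) = G m p (k - p)" unfolding A_Phi Phi_def using 3 by (simp add: nat_diff_distrib)
    also have "\<dots> = (\<Sum>j=0..p. ffact_int (int m - int k + int j) j
                   * binom_ext (int k - int p - 1) (int j)
                   * binom_ext (int k - int j) (int k - int p)
                   * Stirling2_ext (int m + 1) (int m - int k + int j + 1))"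
      unfolding G_def atLeast0AtMost SE
    proof (rule sum.cong)
      fix j assume "j \<in> {..p}"
      then have j: "j \<le> p" by simp
      have e1: "int (k - p) - 1 = int (k - p - 1)" using 3 by simp
      have e2: "int k - int j = int (k - j)" "int k - int p = int (k - p)" using 3 j by simp_all
      have e3: "p + (k - p) = k" "p + (k - p) - j = k - j" using 3 j by simp_all
      show "cc m p (k - p) j * St (Suc m) (int m - int (p + (k - p)) + int j + 1) =
         ffact_int (int m - int k + int j) j * binom_ext (int k - int p - 1) (int j) *
         binom_ext (int k - int j) (int k - int p) * St (Suc m) (int m - int k + int j + 1)"
        unfolding cc_def e2 e3 unfolding e1 binom_nat by simp
    qed simp
    finally show ?thesis .
  qed
qed


lemma part3: "p \<ge> 0 \<Longrightarrow> A_S m 0 p = (if p = 0 then 1 else 0)"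
  unfolding A_Phi Phi_def using St_same[of m] by auto

lemma part4: "p \<ge> 0 \<Longrightarrow> A_S m 1 p = Stirling2_ext (int m + 1) (int m) * (if p = 0 then 1 else 0)
                + Stirling2_ext (int m) (int m - 1) * (if p = 1 then 1 else 0)"
proof -
  assume p: "p \<ge> 0"
  have SE: "Stirling2_ext (int m + 1) x = St (Suc m) x" for x using St_ext[of "Suc m" x] by (simp add: add.commute)
  consider "p = 0" | "p = 1" | "p > 1" using p by linarith
  then show ?thesis
  proof cases
    case 1
    have "A_S m 1 p = G m 0 1" unfolding A_Phi Phi_def 1 by simp
    then show ?thesis unfolding G0 SE 1 by simp
  next
    case 2
    show ?thesis unfolding A_Phi Phi_def 2 St_ext by simp
  next
    case 3
    then show ?thesis unfolding A_Phi Phi_def by simp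
  qed
qed

lemma part5: "k \<ge> 0 \<Longrightarrow> A_S m k 0 = Stirling2_ext (int m + 1) (int m - k + 1)"
proof -
  assume k: "k \<ge> 0"
  have SE: "Stirling2_ext (int m + 1) x = St (Suc m) x" for x using St_ext[of "Suc m" x] by (simp add: add.commute)
  show ?thesis
  proof (cases "k = 0")
    case True
    then show ?thesis unfolding A_Phi Phi_def SE using St_same[of m] St_same[of "Suc m"] by (simp add: add.commute)
  next
    case False
    then have "A_S m k 0 = G m 0 (nat k)" unfolding A_Phi Phi_def using k by simp
    then show ?thesis unfolding G0 SE using k by simp
  qed
qed

theorem theorem3p1:
  shows
  "(\<forall>m::nat. \<forall>k p :: int. m \<ge> 1 \<and> k \<ge> 0 \<and> p \<ge> 0 \<longrightarrow>
      A_S m k p = A_S (m - 1) k p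
                + (int m - k + 1) * A_S (m - 1) (k - 1) p
                + (int m - p) * A_S (m - 1) (k - 1) (p - 1)
                + (int m - p) * (int m - k + 1) * A_S (m - 1) (k - 2) (p - 1))
   \<and> (\<forall>k p :: int. k \<ge> 0 \<and> p \<ge> 0 \<longrightarrow>
      A_S 0 k p = (if k = 0 then 1 else 0) * (if p = 0 then 1 else 0))
   \<and> (\<forall>(m::nat) (p::int). p \<ge> 0 \<longrightarrow> A_S m 0 p = (if p = 0 then 1 else 0))
   \<and> (\<forall>(m::nat) (p::int). p \<ge> 0 \<longrightarrow>
      A_S m 1 p = Stirling2_ext (int m + 1) (int m) * (if p = 0 then 1 else 0)
                + Stirling2_ext (int m) (int m - 1) * (if p = 1 then 1 else 0))
   \<and> (\<forall>(m::nat) (k::int). k \<ge> 0 \<longrightarrow>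
      A_S m k 0 = Stirling2_ext (int m + 1) (int m - k + 1))
   \<and> (\<forall>(m::nat) (k::nat) (p::nat).
      A_S m (int k) (int p) =
        (\<Sum>j=0..p. ffact_int (int m - int k + int j) j
                   * binom_ext (int k - int p - 1) (int j)
                   * binom_ext (int k - int j) (int k - int p)
                   * Stirling2_ext (int m + 1) (int m - int k + int j + 1)))"
proof (intro conjI allI impI)
  fix m :: nat and k p :: int
  assume "1 \<le> m \<and> 0 \<le> k \<and> 0 \<le> p"
  then show "A_S m k p = A_S (m - 1) k p
                + (int m - k + 1) * A_S (m - 1) (k - 1) p
                + (int m - p) * A_S (m - 1) (k - 1) (p - 1)
                + (int m - p) * (int m - k + 1) * A_S (m - 1) (k - 2) (p - 1)"
    using A_S_rec by blast
next
  fix k p :: int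
  assume "0 \<le> k \<and> 0 \<le> p"
  then show "A_S 0 k p = (if k = 0 then 1 else 0) * (if p = 0 then 1 else 0)" unfolding A0 by simp
next
  fix m :: nat and p :: int
  assume "0 \<le> p" then show "A_S m 0 p = (if p = 0 then 1 else 0)" by (rule part3)
next
  fix m :: nat and p :: int
  assume "0 \<le> p" then show "A_S m 1 p = Stirling2_ext (int m + 1) (int m) * (if p = 0 then 1 else 0)
                + Stirling2_ext (int m) (int m - 1) * (if p = 1 then 1 else 0)" by (rule part4)
next
  fix m :: nat and k :: int
  assume "0 \<le> k" then show "A_S m k 0 = Stirling2_ext (int m + 1) (int m - k + 1)" by (rule part5)
next
  fix m k p :: nat
  show "A_S m (int k) (int p) =
        (\<Sum>j=0..p. ffact_int (int m - int k + int j) j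
                   * binom_ext (int k - int p - 1) (int j)
                   * binom_ext (int k - int j) (int k - int p)
                   * Stirling2_ext (int m + 1) (int m - int k + int j + 1))" by (rule sum_formula)
qed


end
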